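(* Let $\Lambda,\mu,\beta,\alpha,\gamma,\delta>0$, $\sigma\in[0,1)$, $\xi\ge 0$, $N_{old},\kappa,\kappa_{old}\in[0,1]$, and set $\Delta=\delta\left[(1-\kappa_{old})N_{old}+(1-\kappa)(1-N_{old})\right]$. Consider the system \begin{align*} \frac{dS}{dt}&=\Lambda-\mu S-\beta(1-\sigma)SI+\xi R,\\ \frac{dE}{dt}&=\beta(1-\sigma)SI-(\mu+\alpha)E,\\ \frac{dI}{dt}&=\alpha E-(\mu+\gamma)I-\Delta I,\\ \frac{dR}{dt}&=\gamma I-\mu R-\xi R, \end{align*} and define $$R_0=\frac{\alpha\beta\Lambda(1-\sigma)}{\mu(\mu+\alpha)(\mu+\gamma+\Delta)}.$$ Let $E_{EE}=(S^*,E^*,I^*,R^* )$ denote the endemic equilibrium, i.e. the equilibrium of this system with $S^*=\frac{\Lambda}{\mu R_0}$ and $E^*,I^*,R^*>0$. If $R_0>1$, then $E_{EE}$ is a locally asymptotically stable equilibrium of this system.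
   Context: This is the $(S,E,I,R)$ part of a modified SEIRS epidemic model (the death compartment $D$, with $dD/dt=\Delta I$, does not feed back and is omitted). $\Lambda$ is a birth rate, $\mu$ a natural death rate, $\beta$ the transmission rate, $\alpha$ the rate of becoming infectious, $\gamma$ the recovery rate, $\sigma$ the control-action efficiency, $\xi$ the resusceptibility fraction, $\Delta$ the COVID-19 death rate, and $R_0$ the basic reproduction number with control action. When $R_0>1$ there is exactly one equilibrium with positive $E,I,R$ components, and it has $S^*=\Lambda/(\mu R_0)$. *)

theory Defs
  imports "HOL-Analysis.Analysis"
begin

definition is_solution :: "('a::real_normed_vector \<Rightarrow> 'a) \<Rightarrow> (real \<Rightarrow> 'a) \<Rightarrow> real set \<Rightarrow> bool" where
  "is_solution f x T \<longleftrightarrow> (\<forall>t\<in>T. (x has_vector_derivative f (x t)) (at t within T))"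

definition equilibrium :: "('a::real_normed_vector \<Rightarrow> 'a) \<Rightarrow> 'a \<Rightarrow> bool" where
  "equilibrium f xs \<longleftrightarrow> f xs = 0"

definition lyapunov_stable :: "('a::real_normed_vector \<Rightarrow> 'a) \<Rightarrow> 'a \<Rightarrow> bool" where
  "lyapunov_stable f xs \<longleftrightarrow>
     (\<forall>\<epsilon>>0. \<exists>\<delta>>0. \<forall>x T. is_solution f x {0..T} \<and> dist (x 0) xs < \<delta>
        \<longrightarrow> (\<forall>t\<in>{0..T}. dist (x t) xs < \<epsilon>))"

definition locally_attractive :: "('a::real_normed_vector \<Rightarrow> 'a) \<Rightarrow> 'a \<Rightarrow> bool" where
  "locally_attractive f xs \<longleftrightarrow>
     (\<exists>\<delta>>0. \<forall>x. is_solution f x {0..} \<and> dist (x 0) xs < \<delta> \<longrightarrow> (x \<longlongrightarrow> xs) at_top)"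

definition locally_asymptotically_stable :: "('a::real_normed_vector \<Rightarrow> 'a) \<Rightarrow> 'a \<Rightarrow> bool" where
  "locally_asymptotically_stable f xs \<longleftrightarrow>
     equilibrium f xs \<and> lyapunov_stable f xs \<and> locally_attractive f xs"

definition covid_Delta :: "real \<Rightarrow> real \<Rightarrow> real \<Rightarrow> real \<Rightarrow> real" where
  "covid_Delta \<delta> N_old \<kappa> \<kappa>_old = \<delta> * ((1 - \<kappa>_old) * N_old + (1 - \<kappa>) * (1 - N_old))"

definition R0 :: "real \<Rightarrow> real \<Rightarrow> real \<Rightarrow> real \<Rightarrow> real \<Rightarrow> real \<Rightarrow> real \<Rightarrow> real" where
  "R0 \<Lambda> \<mu> \<beta> \<alpha> \<gamma> \<sigma> \<Delta> = (\<alpha> * \<beta> * \<Lambda> * (1 - \<sigma>)) / (\<mu> * (\<mu> + \<alpha>) * (\<mu> + \<gamma> + \<Delta>))"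

definition seir_field :: "real \<Rightarrow> real \<Rightarrow> real \<Rightarrow> real \<Rightarrow> real \<Rightarrow> real \<Rightarrow> real \<Rightarrow> real \<Rightarrow>
    real \<times> real \<times> real \<times> real \<Rightarrow> real \<times> real \<times> real \<times> real" where
  "seir_field \<Lambda> \<mu> \<beta> \<alpha> \<gamma> \<sigma> \<xi> \<Delta> = (\<lambda>(S, E, I, R).
     (\<Lambda> - \<mu> * S - \<beta> * (1 - \<sigma>) * S * I + \<xi> * R,
      \<beta> * (1 - \<sigma>) * S * I - (\<mu> + \<alpha>) * E,
      \<alpha> * E - (\<mu> + \<gamma>) * I - \<Delta> * I,
      \<gamma> * I - \<mu> * R - \<xi> * R))"

end

theory Submission
  imports Defs "HOL-Real_Asymp.Real_Asymp"
begin

lemma sphere_ne: "sphere (0::'a::euclidean_space) 1 \<noteq> {}"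
proof -
  obtain b :: 'a where "b \<in> Basis" using nonempty_Basis by blast
  then have "b \<in> sphere 0 1" by simp
  then show ?thesis by blast
qed

lemma hom2_lower:
  fixes q :: "'a::euclidean_space \<Rightarrow> real"
  assumes cont: "continuous_on UNIV q"
    and hom: "\<And>t u. q (t *\<^sub>R u) = t\<^sup>2 * q u"
    and pos: "\<And>u. norm u = 1 \<Longrightarrow> q u > 0"
  shows "\<exists>m>0. \<forall>u. m * (norm u)\<^sup>2 \<le> q u"
proof -
  obtain u0 where u0: "u0 \<in> sphere 0 1" "\<And>y. y \<in> sphere 0 1 \<Longrightarrow> q u0 \<le> q y"
    using continuous_attains_inf[OF compact_sphere sphere_ne continuous_on_subset[OF cont]] by blast
  have m: "q u0 > 0" using u0 pos by simp
  have "q u0 * (norm u)\<^sup>2 \<le> q u" for u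
  proof (cases "u = 0")
    case True
    then show ?thesis using hom[of 0 u] by simp
  next
    case False
    define v where "v = (1 / norm u) *\<^sub>R u"
    have nv: "norm v = 1" using False by (simp add: v_def)
    have uv: "u = norm u *\<^sub>R v" using False by (simp add: v_def)
    have "q u = (norm u)\<^sup>2 * q v" by (subst uv, rule hom)
    moreover have "q u0 \<le> q v" using u0 nv by simp
    ultimately show ?thesis by (simp add: mult_right_mono mult.commute)
  qed
  then show ?thesis using m by blast
qed

lemma homk_upper:
  fixes q :: "'a::euclidean_space \<Rightarrow> real"
  assumes cont: "continuous_on UNIV q"
    and hom: "\<And>t u. t \<ge> 0 \<Longrightarrow> q (t *\<^sub>R u) = t ^ k * q u"
    and k: "k > 0"
  shows "\<exists>C>0. \<forall>u. \<bar>q u\<bar> \<le> C * norm u ^ k"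
proof -
  have cont': "continuous_on UNIV (\<lambda>u. \<bar>q u\<bar>)" using cont by (intro continuous_intros)
  obtain u0 where u0: "u0 \<in> sphere 0 1" "\<And>y. y \<in> sphere 0 1 \<Longrightarrow> \<bar>q y\<bar> \<le> \<bar>q u0\<bar>"
    using continuous_attains_sup[OF compact_sphere sphere_ne continuous_on_subset[OF cont']] by blast
  have "\<bar>q u\<bar> \<le> (\<bar>q u0\<bar> + 1) * norm u ^ k" for u
  proof (cases "u = 0")
    case True
    have "q 0 = 0" using hom[of 0 0] k by (simp add: zero_power)
    then show ?thesis using True by simp
  next
    case False
    define v where "v = (1 / norm u) *\<^sub>R u"
    have nv: "norm v = 1" using False by (simp add: v_def)
    have uv: "u = norm u *\<^sub>R v" using False by (simp add: v_def)
    have "q u = norm u ^ k * q v" by (subst uv, rule hom) simp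
    then have "\<bar>q u\<bar> = norm u ^ k * \<bar>q v\<bar>" by (simp add: abs_mult)
    also have "\<dots> \<le> norm u ^ k * (\<bar>q u0\<bar> + 1)" using u0(2)[of v] nv by (intro mult_left_mono) auto
    finally show ?thesis by (simp add: mult.commute)
  qed
  moreover have "\<bar>q u0\<bar> + 1 > 0" by simp
  ultimately show ?thesis by blast
qed

lemma finsler:
  fixes q0 q1 :: "'a::euclidean_space \<Rightarrow> real"
  assumes c0: "continuous_on UNIV q0" and c1: "continuous_on UNIV q1"
    and nn: "\<And>u. norm u = 1 \<Longrightarrow> q0 u \<ge> 0"
    and ker: "\<And>u. norm u = 1 \<Longrightarrow> q0 u = 0 \<Longrightarrow> q1 u > 0"
  shows "\<exists>\<epsilon>>0. \<forall>e. 0 < e \<and> e \<le> \<epsilon> \<longrightarrow> (\<forall>u. norm u = 1 \<longrightarrow> q0 u + e * q1 u > 0)"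
proof -
  have c1': "continuous_on UNIV (\<lambda>u. \<bar>q1 u\<bar>)" using c1 by (intro continuous_intros)
  obtain u1 where u1: "u1 \<in> sphere 0 1" "\<And>y. y \<in> sphere 0 1 \<Longrightarrow> \<bar>q1 y\<bar> \<le> \<bar>q1 u1\<bar>"
    using continuous_attains_sup[OF compact_sphere sphere_ne continuous_on_subset[OF c1']] by blast
  define C where "C = \<bar>q1 u1\<bar>"
  have C: "C \<ge> 0" "\<And>y. norm y = 1 \<Longrightarrow> \<bar>q1 y\<bar> \<le> C" using u1 by (auto simp: C_def)
  define S1 where "S1 = sphere (0::'a) 1 \<inter> {u. q1 u \<le> 0}"
  have clS: "closed {u. q1 u \<le> 0}"
    using closed_Collect_le[OF c1 continuous_on_const] by simp
  have cS1: "compact S1" unfolding S1_def by (rule compact_Int_closed[OF compact_sphere clS])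
  show ?thesis
  proof (cases "S1 = {}")
    case True
    show ?thesis
    proof (intro exI[of _ 1] conjI allI impI)
      show "0 < (1::real)" by simp
      fix e :: real and u :: 'a
      assume e: "0 < e \<and> e \<le> 1" and u: "norm u = 1"
      have "q1 u > 0" using True u unfolding S1_def by (auto simp: not_le)
      then show "q0 u + e * q1 u > 0" using nn[OF u] e by (simp add: add_nonneg_pos)
    qed
  next
    case False
    obtain u0 where u0: "u0 \<in> S1" "\<And>y. y \<in> S1 \<Longrightarrow> q0 u0 \<le> q0 y"
      using continuous_attains_inf[OF cS1 False continuous_on_subset[OF c0]] by blast
    have "q0 u0 \<noteq> 0" using ker u0(1) unfolding S1_def by force
    then have al: "q0 u0 > 0" using nn u0(1) unfolding S1_def by force
    define \<epsilon> where "\<epsilon> = q0 u0 / (C + 1)"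
    have ep: "\<epsilon> > 0" using al C by (simp add: \<epsilon>_def)
    show ?thesis
    proof (intro exI[of _ \<epsilon>] conjI allI impI)
      show "\<epsilon> > 0" by (rule ep)
      fix e :: real and u :: 'a
      assume e: "0 < e \<and> e \<le> \<epsilon>" and u: "norm u = 1"
      show "q0 u + e * q1 u > 0"
      proof (cases "q1 u > 0")
        case True
        then show ?thesis using nn[OF u] e by (simp add: add_nonneg_pos)
      next
        case False
        then have "u \<in> S1" using u unfolding S1_def by auto
        then have "q0 u \<ge> q0 u0" using u0 by blast
        have "e * \<bar>q1 u\<bar> \<le> \<epsilon> * C" using e C(2)[OF u] C(1) by (intro mult_mono) auto
        also have "\<dots> < q0 u0" using al C(1) unfolding \<epsilon>_def by (simp add: field_simps)
        finally have "e * \<bar>q1 u\<bar> < q0 u0" .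
        moreover have "- (e * q1 u) \<le> e * \<bar>q1 u\<bar>"
          using e mult_left_mono[OF abs_ge_minus_self[of "q1 u"], of e] by simp
        ultimately have "- (e * q1 u) < q0 u0" by linarith
        then show ?thesis using \<open>q0 u \<ge> q0 u0\<close> by linarith
      qed
    qed
  qed
qed

lemma lyap_decay:
  fixes f :: "'a::real_normed_vector \<Rightarrow> 'a" and V :: "'a \<Rightarrow> real"
  assumes Vder: "\<And>y. (V has_derivative DV y) (at y)"
    and Vlow: "\<And>y. m * (norm (y - xs))\<^sup>2 \<le> V y" and m: "m > 0"
    and decr: "\<And>y. norm (y - xs) < r \<Longrightarrow> DV y (f y) \<le> - c * V y"
    and c: "c > 0" and r: "r > 0"
    and sol: "is_solution f x {0..T}" and small: "V (x 0) < m * r\<^sup>2"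
    and t: "0 \<le> t" "t \<le> T"
  shows "V (x t) \<le> V (x 0) * exp (- c * t)"
proof -
  define \<psi> where "\<psi> s = V (x s) * exp (c * s)" for s
  have Vnn: "V y \<ge> 0" for y using Vlow[of y] m by (meson order_trans zero_le_power2 mult_nonneg_nonneg less_imp_le)
  have der: "(\<psi> has_real_derivative (DV (x s) (f (x s)) + c * V (x s)) * exp (c * s)) (at s within {0..T})"
    if s: "s \<in> {0..T}" for s
  proof -
    have xd: "(x has_vector_derivative f (x s)) (at s within {0..T})"
      using sol s unfolding is_solution_def by blast
    have "((V \<circ> x) has_vector_derivative DV (x s) (f (x s))) (at s within {0..T})"
      by (rule vector_derivative_diff_chain_within[OF xd]) (rule has_derivative_at_withinI[OF Vder])
    then have d1: "((\<lambda>s. V (x s)) has_real_derivative DV (x s) (f (x s))) (at s within {0..T})"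
      by (simp add: has_real_derivative_iff_has_vector_derivative o_def)
    have d2: "((\<lambda>s. exp (c * s)) has_real_derivative exp (c * s) * c) (at s within {0..T})"
      by (auto intro!: derivative_eq_intros)
    show ?thesis
      unfolding \<psi>_def using DERIV_mult[OF d1 d2] by (simp add: algebra_simps)
  qed
  have cont: "continuous_on {0..T} \<psi>"
    using der DERIV_continuous continuous_on_eq_continuous_within by blast
  show ?thesis
  proof (rule ccontr)
    assume "\<not> ?thesis"
    then have "V (x 0) * exp (- c * t) < V (x t)" by simp
    then have "V (x 0) * exp (- c * t) * exp (c * t) < V (x t) * exp (c * t)"
      by (rule mult_strict_right_mono) simp
    then have "V (x 0) < V (x t) * exp (c * t)"
      by (simp add: mult.assoc flip: exp_add)
    then have lt: "\<psi> 0 < \<psi> t" by (simp add: \<psi>_def)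
    define \<beta> where "\<beta> = (\<psi> 0 + min (\<psi> t) (m * r\<^sup>2)) / 2"
    have \<psi>0: "\<psi> 0 = V (x 0)" by (simp add: \<psi>_def)
    have b1: "\<psi> 0 < \<beta>" "\<beta> < \<psi> t" "\<beta> < m * r\<^sup>2"
      using lt small \<psi>0 unfolding \<beta>_def by auto
    define A where "A = {0..t} \<inter> \<psi> -` {\<beta>..}"
    have contt: "continuous_on {0..t} \<psi>" using cont t continuous_on_subset by fastforce
    have clA: "closed A" unfolding A_def
      by (rule continuous_closed_preimage[OF contt]) auto
    have tA: "t \<in> A" using b1 t unfolding A_def by auto
    have bdd: "bdd_below A" unfolding A_def by (rule bdd_belowI[of _ 0]) auto
    define s0 where "s0 = Inf A"
    have s0A: "s0 \<in> A" unfolding s0_def using closed_contains_Inf[OF _ bdd clA] tA by blast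
    have s0t: "0 \<le> s0" "s0 \<le> t" using s0A unfolding A_def by auto
    have s0b: "\<beta> \<le> \<psi> s0" using s0A unfolding A_def by auto
    have below: "\<psi> s < \<beta>" if "0 \<le> s" "s < s0" for s
    proof (rule ccontr)
      assume "\<not> \<psi> s < \<beta>"
      then have "s \<in> A" using that s0t unfolding A_def by auto
      then have "s0 \<le> s" unfolding s0_def using bdd by (simp add: cInf_lower)
      then show False using that by simp
    qed
    have "\<psi> s0 \<le> \<psi> 0"
    proof (rule DERIV_nonpos_imp_decreasing_open[OF s0t(1)])
      show "continuous_on {0..s0} \<psi>" using cont s0t t continuous_on_subset by fastforce
      fix s assume s: "0 < s" "s < s0"
      have sint: "s \<in> interior {0..T}" using s s0t t by auto
      have ds: "(\<psi> has_real_derivative (DV (x s) (f (x s)) + c * V (x s)) * exp (c * s)) (at s)"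
        using der[of s] sint at_within_interior[OF sint] s s0t t by auto
      have "V (x s) \<le> \<psi> s"
        unfolding \<psi>_def using Vnn[of "x s"] s c
        by (simp add: mult_le_cancel_left1)
      also have "\<dots> < m * r\<^sup>2" using below[of s] s b1 by auto
      finally have "m * (norm (x s - xs))\<^sup>2 < m * r\<^sup>2" using Vlow[of "x s"] by linarith
      then have "(norm (x s - xs))\<^sup>2 < r\<^sup>2" using m by simp
      then have "norm (x s - xs) < r" using r by (simp add: power_less_imp_less_base)
      then have "DV (x s) (f (x s)) + c * V (x s) \<le> 0" using decr by fastforce
      then have "(DV (x s) (f (x s)) + c * V (x s)) * exp (c * s) \<le> 0"
        by (simp add: mult_nonpos_nonneg)
      then show "\<exists>y. (\<psi> has_real_derivative y) (at s) \<and> y \<le> 0" using ds by blast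
    qed
    then show False using s0b b1 by simp
  qed
qed

lemma exp_decay_lim: "(c::real) > 0 \<Longrightarrow> ((\<lambda>t. K * exp (- (c / 2) * t)) \<longlongrightarrow> 0) at_top"
  by real_asymp

lemma lyap_LAS:
  fixes f :: "'a::real_normed_vector \<Rightarrow> 'a" and V :: "'a \<Rightarrow> real"
  assumes eq: "f xs = 0"
    and Vder: "\<And>y. (V has_derivative DV y) (at y)"
    and Vlow: "\<And>y. m * (norm (y - xs))\<^sup>2 \<le> V y" and m: "m > 0"
    and Vup: "\<And>y. V y \<le> M * (norm (y - xs))\<^sup>2"
    and decr: "\<And>y. norm (y - xs) < r \<Longrightarrow> DV y (f y) \<le> - c * V y"
    and c: "c > 0" and r: "r > 0"
  shows "locally_asymptotically_stable f xs"
proof -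
  define M1 where "M1 = \<bar>M\<bar> + m"
  have M1: "M1 > 0" "\<And>y. V y \<le> M1 * (norm (y - xs))\<^sup>2"
  proof -
    show "M1 > 0" using m unfolding M1_def by simp
    fix y
    have "M * (norm (y - xs))\<^sup>2 \<le> M1 * (norm (y - xs))\<^sup>2"
      unfolding M1_def using m by (intro mult_right_mono) auto
    then show "V y \<le> M1 * (norm (y - xs))\<^sup>2"
      using Vup[of y] by linarith
  qed
  have Vnn: "V y \<ge> 0" for y using Vlow[of y] m by (meson order_trans zero_le_power2 mult_nonneg_nonneg less_imp_le)
  have key: "V (x t) \<le> V (x 0)" "m * (norm (x t - xs))\<^sup>2 \<le> V (x 0) * exp (- c * t)"
    if sol: "is_solution f x {0..T}" and d: "norm (x 0 - xs) < \<rho> * sqrt (m / M1)"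
      and rho: "0 < \<rho>" "\<rho> \<le> r" and t: "0 \<le> t" "t \<le> T" for x T t \<rho>
  proof -
    have "(norm (x 0 - xs))\<^sup>2 < (\<rho> * sqrt (m / M1))\<^sup>2"
      using d by (intro power_strict_mono) auto
    also have "\<dots> = \<rho>\<^sup>2 * m / M1" using m M1 by (simp add: power_mult_distrib)
    finally have "M1 * (norm (x 0 - xs))\<^sup>2 < m * \<rho>\<^sup>2" using M1 by (simp add: field_simps)
    also have "\<dots> \<le> m * r\<^sup>2" using rho m by (intro mult_left_mono power_mono) auto
    finally have sm: "V (x 0) < m * r\<^sup>2" using M1(2)[of "x 0"] by linarith
    have dec: "V (x t) \<le> V (x 0) * exp (- c * t)"
      by (rule lyap_decay[OF Vder Vlow m decr c r sol sm t])
    moreover have "V (x 0) * exp (- c * t) \<le> V (x 0)"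
      using Vnn[of "x 0"] c t by (simp add: mult_left_le)
    ultimately show "V (x t) \<le> V (x 0)" by linarith
    show "m * (norm (x t - xs))\<^sup>2 \<le> V (x 0) * exp (- c * t)"
      using dec Vlow[of "x t"] by linarith
  qed
  have stable: "lyapunov_stable f xs"
    unfolding lyapunov_stable_def
  proof (intro allI impI)
    fix \<epsilon> :: real assume \<epsilon>: "\<epsilon> > 0"
    define \<rho> where "\<rho> = min r \<epsilon>"
    have rho: "0 < \<rho>" "\<rho> \<le> r" "\<rho> \<le> \<epsilon>" using r \<epsilon> by (auto simp: \<rho>_def)
    show "\<exists>\<delta>>0. \<forall>x T. is_solution f x {0..T} \<and> dist (x 0) xs < \<delta> \<longrightarrow> (\<forall>t\<in>{0..T}. dist (x t) xs < \<epsilon>)"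
    proof (intro exI[of _ "\<rho> * sqrt (m / M1)"] conjI allI impI ballI)
      show "0 < \<rho> * sqrt (m / M1)" using rho m M1 by simp
      fix x T t
      assume H: "is_solution f x {0..T} \<and> dist (x 0) xs < \<rho> * sqrt (m / M1)" and t: "t \<in> {0..T}"
      have d: "norm (x 0 - xs) < \<rho> * sqrt (m / M1)" using H by (simp add: dist_norm)
      have "(norm (x 0 - xs))\<^sup>2 < (\<rho> * sqrt (m / M1))\<^sup>2"
        using d by (intro power_strict_mono) auto
      also have "\<dots> = \<rho>\<^sup>2 * m / M1" using m M1 by (simp add: power_mult_distrib)
      finally have "M1 * (norm (x 0 - xs))\<^sup>2 < m * \<rho>\<^sup>2" using M1 by (simp add: field_simps)
      then have v0: "V (x 0) < m * \<rho>\<^sup>2" using M1(2)[of "x 0"] by linarith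
      have "m * (norm (x t - xs))\<^sup>2 \<le> V (x t)" by (rule Vlow)
      also have "\<dots> \<le> V (x 0)" using key(1)[of x T \<rho> t] H d rho t by auto
      finally have "m * (norm (x t - xs))\<^sup>2 < m * \<rho>\<^sup>2" using v0 by linarith
      then have "(norm (x t - xs))\<^sup>2 < \<rho>\<^sup>2" using m by simp
      then have "norm (x t - xs) < \<rho>" using rho by (simp add: power_less_imp_less_base)
      then show "dist (x t) xs < \<epsilon>" using rho by (simp add: dist_norm)
    qed
  qed
  have attr: "locally_attractive f xs"
    unfolding locally_attractive_def
  proof (intro exI[of _ "r * sqrt (m / M1)"] conjI allI impI)
    show "0 < r * sqrt (m / M1)" using r m M1 by simp
    fix x assume H: "is_solution f x {0..} \<and> dist (x 0) xs < r * sqrt (m / M1)"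
    have d: "norm (x 0 - xs) < r * sqrt (m / M1)" using H by (simp add: dist_norm)
    have solT: "is_solution f x {0..T}" for T
      using H unfolding is_solution_def
      by (meson atLeastAtMost_iff atLeast_iff has_vector_derivative_within_subset subsetI)
    define K where "K = sqrt (V (x 0) / m)"
    have bnd: "norm (x t - xs) \<le> K * exp (- (c / 2) * t)" if t: "t \<ge> 0" for t
    proof -
      have "m * (norm (x t - xs))\<^sup>2 \<le> V (x 0) * exp (- c * t)"
        using key(2)[OF solT[of t] d r _ t] r by auto
      then have "(norm (x t - xs))\<^sup>2 \<le> V (x 0) / m * exp (- c * t)"
        using m by (simp add: field_simps)
      also have "\<dots> = (K * exp (- (c / 2) * t))\<^sup>2"
      proof -
        have e: "(exp (- (c / 2) * t))\<^sup>2 = exp (- c * t)"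
          by (simp add: power2_eq_square flip: exp_add)
        have k: "K\<^sup>2 = V (x 0) / m" unfolding K_def using Vnn[of "x 0"] m by simp
        show ?thesis by (simp only: power_mult_distrib e k)
      qed
      finally have sq: "(norm (x t - xs))\<^sup>2 \<le> (K * exp (- (c / 2) * t))\<^sup>2" .
      have "0 \<le> K * exp (- (c / 2) * t)" unfolding K_def using Vnn[of "x 0"] m by simp
      then show ?thesis by (rule power2_le_imp_le[OF sq])
    qed
    have "((\<lambda>t. norm (x t - xs)) \<longlongrightarrow> 0) at_top"
    proof (rule tendsto_sandwich[OF _ _ tendsto_const exp_decay_lim[OF c, of K]])
      show "\<forall>\<^sub>F t in at_top. 0 \<le> norm (x t - xs)" by simp
      show "\<forall>\<^sub>F t in at_top. norm (x t - xs) \<le> K * exp (- (c / 2) * t)"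
        using eventually_ge_at_top[of "0::real"] by (rule eventually_mono) (rule bnd)
    qed
    then show "(x \<longlongrightarrow> xs) at_top"
      by (simp add: tendsto_norm_zero_iff LIM_zero_iff)
  qed
  show ?thesis
    unfolding locally_asymptotically_stable_def equilibrium_def
    using eq stable attr by simp
qed

abbreviation "cX (u::real\<times>real\<times>real\<times>real) \<equiv> fst u"
abbreviation "cW (u::real\<times>real\<times>real\<times>real) \<equiv> fst (snd u)"
abbreviation "cZ (u::real\<times>real\<times>real\<times>real) \<equiv> fst (snd (snd u))"
abbreviation "cD (u::real\<times>real\<times>real\<times>real) \<equiv> snd (snd (snd u))"


definition qf0 :: "real \<Rightarrow> real \<Rightarrow> real \<Rightarrow> real \<Rightarrow> real \<Rightarrow> real \<Rightarrow> real \<Rightarrow> real \<Rightarrow> real \<Rightarrow> real" where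
  "qf0 p1 p2 p3 p4 p5 X W Z D = X\<^sup>2 + p1 * W\<^sup>2 + 2 * p2 * W * Z + p3 * Z\<^sup>2 - 2 * p4 * W * D + p5 * D\<^sup>2"

definition dqf0 :: "real \<Rightarrow> real \<Rightarrow> real \<Rightarrow> real \<Rightarrow> real \<Rightarrow> real \<Rightarrow> real \<Rightarrow> real \<Rightarrow> real
    \<Rightarrow> real \<Rightarrow> real \<Rightarrow> real \<Rightarrow> real \<Rightarrow> real" where
  "dqf0 p1 p2 p3 p4 p5 X W Z D qX qW qZ qD = 2 * (X * qX + p1 * W * qW + p2 * (W * qZ + Z * qW)
     + p3 * Z * qZ - p4 * (W * qD + D * qW) + p5 * D * qD)"

definition v0 :: "real \<Rightarrow> real \<Rightarrow> real \<Rightarrow> real \<Rightarrow> real \<Rightarrow> real \<Rightarrow> real \<Rightarrow> real \<Rightarrow> real \<Rightarrow> real \<Rightarrow> real" where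
  "v0 h a b k1 k2 k3 = qf0 (2 * h * (k1+k2)/k1\<^sup>2) ((a-b)/k1) ((k1+k2) * (a-b)/(k1 * k2)) (b/k1) ((k1+k2+k3) * b/(k1 * k2))"

definition dv0 :: "real \<Rightarrow> real \<Rightarrow> real \<Rightarrow> real \<Rightarrow> real \<Rightarrow> real \<Rightarrow> real \<Rightarrow> real \<Rightarrow> real \<Rightarrow> real
    \<Rightarrow> real \<Rightarrow> real \<Rightarrow> real \<Rightarrow> real \<Rightarrow> real" where
  "dv0 h a b k1 k2 k3 = dqf0 (2 * h * (k1+k2)/k1\<^sup>2) ((a-b)/k1) ((k1+k2) * (a-b)/(k1 * k2)) (b/k1) ((k1+k2+k3) * b/(k1 * k2))"

lemma qf0_deriv:
  "((\<lambda>u. qf0 p1 p2 p3 p4 p5 (cX u) (cW u) (cZ u) (cD u) + e * (cX u * cZ u + (cD u)\<^sup>2)) has_derivative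
    (\<lambda>v. dqf0 p1 p2 p3 p4 p5 (cX u) (cW u) (cZ u) (cD u) (cX v) (cW v) (cZ v) (cD v)
      + e * (cX u * cZ v + cZ u * cX v + 2 * cD u * cD v))) (at u)"
  unfolding qf0_def dqf0_def
  by (auto intro!: derivative_eq_intros ext simp: power2_eq_square algebra_simps)

lemma qf0_hom: "qf0 p1 p2 p3 p4 p5 (t * X) (t * W) (t * Z) (t * D) = t\<^sup>2 * qf0 p1 p2 p3 p4 p5 X W Z D"
  unfolding qf0_def by (simp add: power2_eq_square algebra_simps)

lemma dqf0_bilin: "dqf0 p1 p2 p3 p4 p5 (s * X) (s * W) (s * Z) (s * D) (t * qX) (t * qW) (t * qZ) (t * qD)
   = s * t * dqf0 p1 p2 p3 p4 p5 X W Z D qX qW qZ qD"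
  unfolding dqf0_def by (simp add: algebra_simps)

lemma v0_sos_gen:
  fixes X W Z D h a b k1 k2 P K :: real
  assumes "k1 \<noteq> 0" "k2 \<noteq> 0" "P \<noteq> 0" "K \<noteq> 0"
  shows "X\<^sup>2 + (2 * h * P/k1\<^sup>2) * W\<^sup>2 + 2 * ((a-b)/k1) * W * Z
     + (P * (a-b)/(k1 * k2)) * Z\<^sup>2 - 2 * (b/k1) * W * D + (K * b/(k1 * k2)) * D\<^sup>2
   = X\<^sup>2 + (2 * h * P/k1\<^sup>2 - (a-b) * k2/(k1 * P) - b * k2/(k1 * K)) * W\<^sup>2
     + ((a-b)/(k1 * k2 * P)) * (P * Z + k2 * W)\<^sup>2
     + (b/(k1 * k2 * K)) * (K * D - k2 * W)\<^sup>2"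
  using assms by (simp add: field_simps power2_eq_square; simp add: algebra_simps)

lemma v0_sos:
  assumes "k1 > 0" "k2 > 0" "k3 > 0"
  shows "v0 h a b k1 k2 k3 X W Z D = X\<^sup>2
     + (2 * h * (k1+k2)/k1\<^sup>2 - (a-b) * k2/(k1 * (k1+k2)) - b * k2/(k1 * (k1+k2+k3))) * W\<^sup>2
     + ((a-b)/(k1 * k2 * (k1+k2))) * ((k1+k2) * Z + k2 * W)\<^sup>2
     + (b/(k1 * k2 * (k1+k2+k3))) * ((k1+k2+k3) * D - k2 * W)\<^sup>2"
  unfolding v0_def qf0_def by (rule v0_sos_gen) (use assms in auto)

lemma g0_sos:
  assumes "k1 > 0" "k2 > 0" "k3 > 0"
  shows "dv0 h a b k1 k2 k3 X W Z D (-h * X - (a-b) * Z + b * D) (k1 * X - (k1+k2) * W) (k2 * W) (-k3 * D - k2 * W)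
    = -2 * (h * (X - (k1+k2) * W/k1)\<^sup>2 + (h * (k1+k2)\<^sup>2/k1\<^sup>2 - k2 * a/k1) * W\<^sup>2 + k3 * ((k1+k2+k3) * b/(k1 * k2)) * D\<^sup>2)"
proof -
  have "k1 + k2 \<noteq> 0" "k1 + k2 + k3 \<noteq> 0" "k1 + (k2 + k3) \<noteq> 0" "k1 \<noteq> 0" "k2 \<noteq> 0" using assms by auto
  then show ?thesis unfolding dv0_def dqf0_def
    by (simp add: field_simps power2_eq_square; simp add: algebra_simps)
qed

definition Qn :: "real \<Rightarrow> real \<Rightarrow> real \<Rightarrow> real \<Rightarrow> real \<Rightarrow> real \<Rightarrow> real \<Rightarrow> real\<times>real\<times>real\<times>real \<Rightarrow> real" where
  "Qn h a b k1 k2 k3 e u = v0 h a b k1 k2 k3 (cX u) (cW u) (cZ u) (cD u) + e * (cX u * cZ u + (cD u)\<^sup>2)"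

definition DQn :: "real \<Rightarrow> real \<Rightarrow> real \<Rightarrow> real \<Rightarrow> real \<Rightarrow> real \<Rightarrow> real \<Rightarrow> real\<times>real\<times>real\<times>real
    \<Rightarrow> real\<times>real\<times>real\<times>real \<Rightarrow> real" where
  "DQn h a b k1 k2 k3 e u v = dv0 h a b k1 k2 k3 (cX u) (cW u) (cZ u) (cD u) (cX v) (cW v) (cZ v) (cD v)
     + e * (cX u * cZ v + cZ u * cX v + 2 * cD u * cD v)"

definition Ln :: "real \<Rightarrow> real \<Rightarrow> real \<Rightarrow> real \<Rightarrow> real \<Rightarrow> real \<Rightarrow> real\<times>real\<times>real\<times>real \<Rightarrow> real\<times>real\<times>real\<times>real" where
  "Ln h a b k1 k2 k3 u = (- h * cX u - (a - b) * cZ u + b * cD u, k1 * cX u - (k1 + k2) * cW u,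
     k2 * cW u, - k3 * cD u - k2 * cW u)"

definition Nn :: "real \<Rightarrow> real \<Rightarrow> real\<times>real\<times>real\<times>real \<Rightarrow> real\<times>real\<times>real\<times>real" where
  "Nn a k1 u = (- a * cX u * cZ u, k1 * cX u * cZ u, 0, 0)"

definition Fn :: "real \<Rightarrow> real \<Rightarrow> real \<Rightarrow> real \<Rightarrow> real \<Rightarrow> real \<Rightarrow> real\<times>real\<times>real\<times>real \<Rightarrow> real\<times>real\<times>real\<times>real" where
  "Fn h a b k1 k2 k3 u = (- h * cX u - (a - b) * cZ u + b * cD u - a * cX u * cZ u,
     k1 * cX u - (k1 + k2) * cW u + k1 * cX u * cZ u, k2 * cW u, - k3 * cD u - k2 * cW u)"

lemma Qn_deriv: "(Qn h a b k1 k2 k3 e has_derivative DQn h a b k1 k2 k3 e u) (at u)"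
proof -
  have "Qn h a b k1 k2 k3 e = (\<lambda>u. v0 h a b k1 k2 k3 (cX u) (cW u) (cZ u) (cD u) + e * (cX u * cZ u + (cD u)\<^sup>2))"
    by (rule ext) (simp add: Qn_def)
  moreover have "DQn h a b k1 k2 k3 e u = (\<lambda>v. dv0 h a b k1 k2 k3 (cX u) (cW u) (cZ u) (cD u) (cX v) (cW v) (cZ v) (cD v)
     + e * (cX u * cZ v + cZ u * cX v + 2 * cD u * cD v))"
    by (rule ext) (simp add: DQn_def)
  ultimately show ?thesis unfolding v0_def dv0_def by (simp only: qf0_deriv)
qed

lemma Qn_hom: "Qn h a b k1 k2 k3 e (t *\<^sub>R u) = t\<^sup>2 * Qn h a b k1 k2 k3 e u"
proof -
  have "Qn h a b k1 k2 k3 e (t *\<^sub>R u) = v0 h a b k1 k2 k3 (t * cX u) (t * cW u) (t * cZ u) (t * cD u)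
     + e * ((t * cX u) * (t * cZ u) + (t * cD u)\<^sup>2)"
    by (simp add: Qn_def)
  also have "\<dots> = t\<^sup>2 * Qn h a b k1 k2 k3 e u"
    unfolding v0_def qf0_hom by (simp add: Qn_def v0_def power2_eq_square algebra_simps)
  finally show ?thesis .
qed

lemma DQn_bilin: "DQn h a b k1 k2 k3 e (s *\<^sub>R u) (t *\<^sub>R v) = s * t * DQn h a b k1 k2 k3 e u v"
proof -
  have "DQn h a b k1 k2 k3 e (s *\<^sub>R u) (t *\<^sub>R v) = dv0 h a b k1 k2 k3 (s * cX u) (s * cW u) (s * cZ u) (s * cD u)
     (t * cX v) (t * cW v) (t * cZ v) (t * cD v)
     + e * ((s * cX u) * (t * cZ v) + (s * cZ u) * (t * cX v) + 2 * (s * cD u) * (t * cD v))"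
    by (simp add: DQn_def)
  also have "\<dots> = s * t * DQn h a b k1 k2 k3 e u v"
    unfolding dv0_def dqf0_bilin by (simp add: DQn_def dv0_def algebra_simps)
  finally show ?thesis .
qed

lemma Ln_scale: "Ln h a b k1 k2 k3 (t *\<^sub>R u) = t *\<^sub>R Ln h a b k1 k2 k3 u"
  by (simp add: Ln_def algebra_simps)

lemma Nn_scale: "Nn a k1 (t *\<^sub>R u) = (t * t) *\<^sub>R Nn a k1 u"
  by (simp add: Nn_def algebra_simps)

lemma dqf0_add: "dqf0 p1 p2 p3 p4 p5 X W Z D (qX + rX) (qW + rW) (qZ + rZ) (qD + rD)
   = dqf0 p1 p2 p3 p4 p5 X W Z D qX qW qZ qD + dqf0 p1 p2 p3 p4 p5 X W Z D rX rW rZ rD"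
  unfolding dqf0_def by (simp add: algebra_simps)

lemma DQn_add: "DQn h a b k1 k2 k3 e u (v + w) = DQn h a b k1 k2 k3 e u v + DQn h a b k1 k2 k3 e u w"
proof -
  have "DQn h a b k1 k2 k3 e u (v + w) = dv0 h a b k1 k2 k3 (cX u) (cW u) (cZ u) (cD u)
     (cX v + cX w) (cW v + cW w) (cZ v + cZ w) (cD v + cD w)
     + e * (cX u * (cZ v + cZ w) + cZ u * (cX v + cX w) + 2 * cD u * (cD v + cD w))"
    by (simp add: DQn_def)
  also have "\<dots> = DQn h a b k1 k2 k3 e u v + DQn h a b k1 k2 k3 e u w"
    unfolding dv0_def dqf0_add by (simp add: DQn_def dv0_def algebra_simps)
  finally show ?thesis .
qed

lemma DQn_Fn: "DQn h a b k1 k2 k3 e u (Fn h a b k1 k2 k3 u)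
    = DQn h a b k1 k2 k3 e u (Ln h a b k1 k2 k3 u) + DQn h a b k1 k2 k3 e u (Nn a k1 u)"
proof -
  have "Fn h a b k1 k2 k3 u = Ln h a b k1 k2 k3 u + Nn a k1 u"
    by (simp add: Fn_def Ln_def Nn_def prod_eq_iff algebra_simps)
  then show ?thesis by (simp add: DQn_add)
qed

lemma prod4_eq0: "cX u = 0 \<Longrightarrow> cW u = 0 \<Longrightarrow> cZ u = 0 \<Longrightarrow> cD u = 0 \<Longrightarrow> u = 0"
  by (simp add: prod_eq_iff)

lemma norm_lyap:
  assumes b: "0 \<le> b" "b < a" and h: "a < h" and k: "k1 > 0" "k2 > 0" "k3 > 0"
  shows "\<exists>e>0. \<exists>m M c r. m > 0 \<and> c > 0 \<and> r > 0 \<and> (\<forall>u. m * (norm u)\<^sup>2 \<le> Qn h a b k1 k2 k3 e u)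
     \<and> (\<forall>u. Qn h a b k1 k2 k3 e u \<le> M * (norm u)\<^sup>2)
     \<and> (\<forall>u. norm u < r \<longrightarrow> DQn h a b k1 k2 k3 e u (Fn h a b k1 k2 k3 u) \<le> - c * Qn h a b k1 k2 k3 e u)"
proof -
  have a: "a > 0" using b by linarith
  define s where "s = k1 + k2"
  define K where "K = s + k3"
  have sK: "s > 0" "K > 0" "s \<le> K" using k by (auto simp: s_def K_def)
  define pr where "pr = 2 * h * s/k1\<^sup>2 - (a-b) * k2/(k1 * s) - b * k2/(k1 * K)"
  define cg where "cg = h * s\<^sup>2/k1\<^sup>2 - k2 * a/k1"
  have A: "b * k2/(k1 * K) \<le> b * k2/(k1 * s)"
    using b k sK by (intro divide_left_mono mult_left_mono mult_pos_pos) auto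
  have B0: "a * (k1 * k2) < h * s\<^sup>2"
  proof -
    have "a * (k1 * k2) < h * (k1 * k2)" using h k by simp
    also have "\<dots> \<le> h * s\<^sup>2" using h a k unfolding s_def
      by (intro mult_left_mono) (auto simp: power2_eq_square algebra_simps)
    finally show ?thesis .
  qed
  have k1s: "k1\<^sup>2 * s > 0" using k sK by simp
  have B1: "a * (k1 * k2) / (k1\<^sup>2 * s) < h * s\<^sup>2 / (k1\<^sup>2 * s)"
    by (rule divide_strict_right_mono[OF B0 k1s])
  have B: "a * k2/(k1 * s) < 2 * h * s/k1\<^sup>2"
  proof -
    have "a * k2/(k1 * s) = a * (k1 * k2) / (k1\<^sup>2 * s)" using k sK by (simp add: field_simps power2_eq_square)
    also have "\<dots> < h * s\<^sup>2 / (k1\<^sup>2 * s)" by (rule B1)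
    also have "\<dots> = h * s / k1\<^sup>2" using k sK by (simp add: field_simps power2_eq_square)
    also have "\<dots> \<le> 2 * h * s/k1\<^sup>2" using h a sK k by (intro divide_right_mono) auto
    finally show ?thesis .
  qed
  have pr: "pr > 0"
  proof -
    have "(a-b) * k2/(k1 * s) + b * k2/(k1 * s) = a * k2/(k1 * s)"
      using k sK by (simp add: field_simps)
    then show ?thesis unfolding pr_def using A B by linarith
  qed
  have cg: "cg > 0"
  proof -
    have "k2 * a/k1 = a * (k1 * k2) / (k1\<^sup>2 * s) * s" using k sK by (simp add: field_simps power2_eq_square)
    also have "\<dots> < h * s\<^sup>2 / (k1\<^sup>2 * s) * s" by (rule mult_strict_right_mono[OF B1 sK(1)])
    also have "\<dots> = h * s\<^sup>2/k1\<^sup>2" using k sK by (simp add: field_simps power2_eq_square)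
    finally show ?thesis unfolding cg_def by simp
  qed
  note vs = v0_sos[OF k, of h a b, folded s_def, folded K_def]
  note gs = g0_sos[OF k, of h a b, folded s_def, folded K_def]
  have v0nn: "v0 h a b k1 k2 k3 X W Z D \<ge> 0" for X W Z D
    unfolding vs pr_def[symmetric] using pr b a k sK by (intro add_nonneg_nonneg mult_nonneg_nonneg) auto
  have v0z: "X = 0 \<and> W = 0 \<and> Z = 0 \<and> b * D = 0" if "v0 h a b k1 k2 k3 X W Z D = 0" for X W Z D
  proof -
    have t1: "X\<^sup>2 \<ge> 0" "pr * W\<^sup>2 \<ge> 0" "((a-b)/(k1 * k2 * s)) * (s * Z + k2 * W)\<^sup>2 \<ge> 0"
       "(b/(k1 * k2 * K)) * (K * D - k2 * W)\<^sup>2 \<ge> 0"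
      using pr b k sK by (auto intro!: mult_nonneg_nonneg)
    have "X\<^sup>2 + pr * W\<^sup>2 + ((a-b)/(k1 * k2 * s)) * (s * Z + k2 * W)\<^sup>2
       + (b/(k1 * k2 * K)) * (K * D - k2 * W)\<^sup>2 = 0"
      using that unfolding vs pr_def by simp
    then have z: "X\<^sup>2 = 0" "pr * W\<^sup>2 = 0" "((a-b)/(k1 * k2 * s)) * (s * Z + k2 * W)\<^sup>2 = 0"
       "(b/(k1 * k2 * K)) * (K * D - k2 * W)\<^sup>2 = 0"
      using t1 by linarith+
    have X: "X = 0" using z(1) by simp
    have W: "W = 0" using z(2) pr by simp
    have Z: "Z = 0" using z(3) W b k sK by simp
    have "b * D = 0" using z(4) W b k sK by auto
    then show ?thesis using X W Z by simp
  qed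
  define g0 where "g0 X W Z D = dv0 h a b k1 k2 k3 X W Z D (-h * X - (a-b) * Z + b * D) (k1 * X - s * W) (k2 * W) (-k3 * D - k2 * W)" for X W Z D
  have g0e: "g0 X W Z D = -2 * (h * (X - s * W/k1)\<^sup>2 + cg * W\<^sup>2 + k3 * (K * b/(k1 * k2)) * D\<^sup>2)" for X W Z D
    unfolding g0_def cg_def by (rule gs)
  have g0nn: "- g0 X W Z D \<ge> 0" for X W Z D
  proof -
    define S where "S = h * (X - s * W/k1)\<^sup>2 + cg * W\<^sup>2 + k3 * (K * b/(k1 * k2)) * D\<^sup>2"
    have "S \<ge> 0" unfolding S_def
      using cg b k h a sK by (intro add_nonneg_nonneg mult_nonneg_nonneg) auto
    moreover have "g0 X W Z D = -2 * S" unfolding g0e S_def by simp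
    ultimately show ?thesis by linarith
  qed
  have g0z: "X = 0 \<and> W = 0 \<and> b * D = 0" if "g0 X W Z D = 0" for X W Z D
  proof -
    have t1: "h * (X - s * W/k1)\<^sup>2 \<ge> 0" "cg * W\<^sup>2 \<ge> 0" "k3 * (K * b/(k1 * k2)) * D\<^sup>2 \<ge> 0"
      using cg b k h a sK by (auto intro!: mult_nonneg_nonneg)
    have "h * (X - s * W/k1)\<^sup>2 + cg * W\<^sup>2 + k3 * (K * b/(k1 * k2)) * D\<^sup>2 = 0"
      using that unfolding g0e by simp
    then have z: "h * (X - s * W/k1)\<^sup>2 = 0" "cg * W\<^sup>2 = 0" "k3 * (K * b/(k1 * k2)) * D\<^sup>2 = 0"
      using t1 by linarith+
    have W: "W = 0" using z(2) cg by simp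
    have X: "X = 0" using z(1) W h a by simp
    have "b * D = 0" using z(3) k sK by auto
    then show ?thesis using X W by simp
  qed
  obtain e1 where e1: "e1 > 0" "\<And>e u. 0 < e \<Longrightarrow> e \<le> e1 \<Longrightarrow> norm u = 1 \<Longrightarrow>
      v0 h a b k1 k2 k3 (cX u) (cW u) (cZ u) (cD u) + e * (cX u * cZ u + (cD u)\<^sup>2) > 0"
  proof -
    have "\<exists>\<epsilon>>0. \<forall>e. 0 < e \<and> e \<le> \<epsilon> \<longrightarrow> (\<forall>u::real\<times>real\<times>real\<times>real. norm u = 1 \<longrightarrow>
       v0 h a b k1 k2 k3 (cX u) (cW u) (cZ u) (cD u) + e * (cX u * cZ u + (cD u)\<^sup>2) > 0)"
    proof (rule finsler)
      show "continuous_on UNIV (\<lambda>u::real\<times>real\<times>real\<times>real. v0 h a b k1 k2 k3 (cX u) (cW u) (cZ u) (cD u))"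
        unfolding v0_def qf0_def by (intro continuous_intros)
      show "continuous_on UNIV (\<lambda>u::real\<times>real\<times>real\<times>real. cX u * cZ u + (cD u)\<^sup>2)"
        by (intro continuous_intros)
      fix u :: "real\<times>real\<times>real\<times>real"
      show "v0 h a b k1 k2 k3 (cX u) (cW u) (cZ u) (cD u) \<ge> 0" by (rule v0nn)
      assume u: "norm u = 1" and z: "v0 h a b k1 k2 k3 (cX u) (cW u) (cZ u) (cD u) = 0"
      have zz: "cX u = 0" "cW u = 0" "cZ u = 0" using v0z[OF z] by auto
      have "cD u \<noteq> 0" using prod4_eq0[OF zz] u by auto
      then show "cX u * cZ u + (cD u)\<^sup>2 > 0" using zz by simp
    qed
    then show ?thesis using that by blast
  qed
  define gh where "gh u = cX u * (k2 * cW u) + cZ u * (- h * cX u - (a - b) * cZ u + b * cD u) + 2 * cD u * (- k3 * cD u - k2 * cW u)" for u :: "real\<times>real\<times>real\<times>real"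
  obtain e2 where e2: "e2 > 0" "\<And>e u. 0 < e \<Longrightarrow> e \<le> e2 \<Longrightarrow> norm u = 1 \<Longrightarrow>
      - g0 (cX u) (cW u) (cZ u) (cD u) + e * (- gh u) > 0"
  proof -
    have "\<exists>\<epsilon>>0. \<forall>e. 0 < e \<and> e \<le> \<epsilon> \<longrightarrow> (\<forall>u::real\<times>real\<times>real\<times>real. norm u = 1 \<longrightarrow>
       - g0 (cX u) (cW u) (cZ u) (cD u) + e * (- gh u) > 0)"
    proof (rule finsler)
      show "continuous_on UNIV (\<lambda>u::real\<times>real\<times>real\<times>real. - g0 (cX u) (cW u) (cZ u) (cD u))"
        unfolding g0e using k by (intro continuous_intros) auto
      show "continuous_on UNIV (\<lambda>u::real\<times>real\<times>real\<times>real. - gh u)"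
        unfolding gh_def by (intro continuous_intros)
      fix u :: "real\<times>real\<times>real\<times>real"
      show "- g0 (cX u) (cW u) (cZ u) (cD u) \<ge> 0" by (rule g0nn)
      assume u: "norm u = 1" and z: "- g0 (cX u) (cW u) (cZ u) (cD u) = 0"
      have zz: "cX u = 0" "cW u = 0" "b * cD u = 0" using g0z[of "cX u" "cW u" "cZ u" "cD u"] z by auto
      have gh1: "- gh u = (a - b) * (cZ u)\<^sup>2 + 2 * k3 * (cD u)\<^sup>2 - cZ u * (b * cD u)"
        unfolding gh_def using zz(1,2) by (simp add: algebra_simps power2_eq_square)
      have gh0: "- gh u = (a - b) * (cZ u)\<^sup>2 + 2 * k3 * (cD u)\<^sup>2"
        using gh1 zz(3) by simp
      have "cZ u \<noteq> 0 \<or> cD u \<noteq> 0" using u prod4_eq0[of u] zz by auto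
      then show "- gh u > 0" unfolding gh0 using b k
        by (auto intro: add_pos_nonneg add_nonneg_pos)
    qed
    then show ?thesis using that by blast
  qed
  define e where "e = min e1 e2"
  have e: "e > 0" "e \<le> e1" "e \<le> e2" using e1 e2 by (auto simp: e_def)
  define Q where "Q = Qn h a b k1 k2 k3 e"
  define G where "G u = DQn h a b k1 k2 k3 e u (Ln h a b k1 k2 k3 u)" for u
  define Cb where "Cb u = DQn h a b k1 k2 k3 e u (Nn a k1 u)" for u
  have Gd: "G u = g0 (cX u) (cW u) (cZ u) (cD u) + e * gh u" for u
    unfolding G_def DQn_def g0_def gh_def Ln_def s_def by simp
  have Qpos: "Q u > 0" if "norm u = 1" for u
    using e1(2)[OF e(1) e(2) that] unfolding Q_def Qn_def by simp
  have Gneg: "- G u > 0" if "norm u = 1" for u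
    using e2(2)[OF e(1) e(3) that] unfolding Gd by simp
  have Qhom: "Q (t *\<^sub>R u) = t\<^sup>2 * Q u" for t u
    unfolding Q_def by (rule Qn_hom)
  have Ghom: "- G (t *\<^sub>R u) = t\<^sup>2 * - G u" for t u
    unfolding G_def Ln_scale DQn_bilin by (simp add: power2_eq_square)
  have Chom: "Cb (t *\<^sub>R u) = t ^ 3 * Cb u" for t u
    unfolding Cb_def Nn_scale DQn_bilin by (simp add: power3_eq_cube)
  have Qc: "continuous_on UNIV Q" unfolding Q_def Qn_def v0_def qf0_def by (intro continuous_intros)
  have Gc: "continuous_on UNIV (\<lambda>u. - G u)" unfolding G_def DQn_def dv0_def dqf0_def Ln_def by (intro continuous_intros)
  have Cc: "continuous_on UNIV Cb" unfolding Cb_def DQn_def dv0_def dqf0_def Nn_def by (intro continuous_intros)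
  obtain m where m: "m > 0" "\<And>u. m * (norm u)\<^sup>2 \<le> Q u"
    using hom2_lower[OF Qc Qhom Qpos] by blast
  obtain M where M: "M > 0" "\<And>u. \<bar>Q u\<bar> \<le> M * norm u ^ 2"
    using homk_upper[OF Qc, of 2] Qhom by force
  obtain g where g: "g > 0" "\<And>u. g * (norm u)\<^sup>2 \<le> - G u"
    using hom2_lower[OF Gc Ghom Gneg] by blast
  obtain K where K: "K > 0" "\<And>u. \<bar>Cb u\<bar> \<le> K * norm u ^ 3"
    using homk_upper[OF Cc, of 3] Chom by force
  define r where "r = g / (2 * K)"
  define c where "c = g / (2 * M)"
  have r: "r > 0" using g K by (simp add: r_def)
  have c: "c > 0" using g M by (simp add: c_def)
  have dec: "DQn h a b k1 k2 k3 e u (Fn h a b k1 k2 k3 u) \<le> - c * Q u" if u: "norm u < r" for u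
  proof -
    have split: "DQn h a b k1 k2 k3 e u (Fn h a b k1 k2 k3 u) = G u + Cb u"
      unfolding G_def Cb_def by (rule DQn_Fn)
    have "K * norm u ^ 3 = (K * norm u) * (norm u)\<^sup>2" by (simp add: power2_eq_square power3_eq_cube)
    also have "\<dots> \<le> (g / 2) * (norm u)\<^sup>2"
    proof (rule mult_right_mono)
      have "K * norm u \<le> K * r" using u K by simp
      also have "\<dots> = g / 2" using K by (simp add: r_def)
      finally show "K * norm u \<le> g / 2" .
    qed simp
    finally have cb: "Cb u \<le> (g / 2) * (norm u)\<^sup>2" using K(2)[of u] by linarith
    have "G u + Cb u \<le> - (g / 2) * (norm u)\<^sup>2" using g(2)[of u] cb by linarith
    also have "\<dots> \<le> - c * Q u"
    proof -
      have "Q u \<le> M * (norm u)\<^sup>2" using M(2)[of u] by simp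
      then have "c * Q u \<le> c * (M * (norm u)\<^sup>2)" using c by (simp add: mult_left_mono)
      also have "\<dots> = (g / 2) * (norm u)\<^sup>2" using M by (simp add: c_def)
      finally show ?thesis by simp
    qed
    finally show ?thesis using split by simp
  qed
  show ?thesis
  proof (intro exI conjI allI impI)
    show "e > 0" by (rule e)
    show "m > 0" "c > 0" "r > 0" by (fact m(1) c r)+
    fix u :: "real\<times>real\<times>real\<times>real"
    show "m * (norm u)\<^sup>2 \<le> Qn h a b k1 k2 k3 e u" using m(2)[of u] by (simp add: Q_def)
    show "Qn h a b k1 k2 k3 e u \<le> M * (norm u)\<^sup>2" using M(2)[of u] by (simp add: Q_def)
    assume "norm u < r"
    then show "DQn h a b k1 k2 k3 e u (Fn h a b k1 k2 k3 u) \<le> - c * Qn h a b k1 k2 k3 e u"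
      using dec by (simp add: Q_def)
  qed
qed

lemma field_id:
  fixes \<Lambda> \<mu> bb \<alpha> \<gamma> \<xi> \<Delta> Ss Es Is Rs S E I R :: real
  assumes pos: "Ss > 0" "Es > 0" "Is > 0" "Rs > 0"
    and e1: "\<Lambda> - \<mu> * Ss - bb * Ss * Is + \<xi> * Rs = 0"
    and e2: "bb * Ss * Is - (\<mu> + \<alpha>) * Es = 0"
    and e3: "\<alpha> * Es - (\<mu> + \<gamma>) * Is - \<Delta> * Is = 0"
    and e4: "\<gamma> * Is - \<mu> * Rs - \<xi> * Rs = 0"
  shows "((\<Lambda> - \<mu> * S - bb * S * I + \<xi> * R) / Ss,
          (bb * S * I - (\<mu> + \<alpha>) * E) / Es - (\<alpha> * E - (\<mu> + \<gamma>) * I - \<Delta> * I) / Is,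
          (\<alpha> * E - (\<mu> + \<gamma>) * I - \<Delta> * I) / Is,
          (\<gamma> * I - \<mu> * R - \<xi> * R) / Rs - (\<alpha> * E - (\<mu> + \<gamma>) * I - \<Delta> * I) / Is)
    = Fn (\<mu> + bb * Is) (bb * Is) (\<xi> * Rs / Ss) (\<mu> + \<alpha>) (\<mu> + \<gamma> + \<Delta>) (\<mu> + \<xi>)
        ((S - Ss) / Ss, (E - Es) / Es - (I - Is) / Is, (I - Is) / Is, (R - Rs) / Rs - (I - Is) / Is)"
proof -
  have lam: "\<Lambda> = \<mu> * Ss + bb * Ss * Is - \<xi> * Rs" using e1 by linarith
  have gam: "\<gamma> = (\<mu> + \<xi>) * Rs / Is" using e4 pos by (simp add: field_simps; linarith)
  have alp: "\<alpha> = (\<mu> + \<gamma> + \<Delta>) * Is / Es" using e3 pos by (simp add: field_simps; linarith)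
  have bet: "bb = (\<mu> + \<alpha>) * Es / (Ss * Is)" using e2 pos by (simp add: field_simps; linarith)
  define X where "X = (S - Ss) / Ss"
  define Z where "Z = (I - Is) / Is"
  define W where "W = (E - Es) / Es - Z"
  define D where "D = (R - Rs) / Rs - Z"
  have c1: "(\<Lambda> - \<mu> * S - bb * S * I + \<xi> * R) / Ss = - (\<mu> + bb * Is) * X - (bb * Is - \<xi> * Rs / Ss) * Z
     + \<xi> * Rs / Ss * D - bb * Is * X * Z"
    unfolding lam X_def Z_def D_def using pos by (simp add: field_simps; simp add: algebra_simps)
  have c3: "(\<alpha> * E - (\<mu> + \<gamma>) * I - \<Delta> * I) / Is = (\<mu> + \<gamma> + \<Delta>) * W"
    unfolding alp W_def Z_def using pos by (simp add: field_simps; simp add: algebra_simps)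
  have c2: "(bb * S * I - (\<mu> + \<alpha>) * E) / Es = (\<mu> + \<alpha>) * (X + X * Z - W)"
    unfolding bet X_def W_def Z_def using pos by (simp add: field_simps; simp add: algebra_simps)
  have c4: "(\<gamma> * I - \<mu> * R - \<xi> * R) / Rs = - (\<mu> + \<xi>) * D"
    unfolding gam D_def Z_def using pos by (simp add: field_simps; simp add: algebra_simps)
  show ?thesis
    unfolding c1 c2 c3 c4 X_def[symmetric] Z_def[symmetric] W_def[symmetric] D_def[symmetric]
    by (simp add: Fn_def algebra_simps)
qed

theorem lemma4:
  fixes \<Lambda> \<mu> \<beta> \<alpha> \<gamma> \<delta> \<sigma> \<xi> N_old \<kappa> \<kappa>_old Ss Es Is Rs :: real
  assumes "\<Lambda> > 0" "\<mu> > 0" "\<beta> > 0" "\<alpha> > 0" "\<gamma> > 0" "\<delta> > 0"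
    and "0 \<le> \<sigma>" "\<sigma> < 1" "\<xi> \<ge> 0"
    and "0 \<le> N_old" "N_old \<le> 1" "0 \<le> \<kappa>" "\<kappa> \<le> 1" "0 \<le> \<kappa>_old" "\<kappa>_old \<le> 1"
    and "R0 \<Lambda> \<mu> \<beta> \<alpha> \<gamma> \<sigma> (covid_Delta \<delta> N_old \<kappa> \<kappa>_old) > 1"
    and "equilibrium (seir_field \<Lambda> \<mu> \<beta> \<alpha> \<gamma> \<sigma> \<xi> (covid_Delta \<delta> N_old \<kappa> \<kappa>_old)) (Ss, Es, Is, Rs)"
    and "Ss = \<Lambda> / (\<mu> * R0 \<Lambda> \<mu> \<beta> \<alpha> \<gamma> \<sigma> (covid_Delta \<delta> N_old \<kappa> \<kappa>_old))"
    and "Es > 0" "Is > 0" "Rs > 0"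
  shows "locally_asymptotically_stable
           (seir_field \<Lambda> \<mu> \<beta> \<alpha> \<gamma> \<sigma> \<xi> (covid_Delta \<delta> N_old \<kappa> \<kappa>_old)) (Ss, Es, Is, Rs)"
proof -
  define \<Delta> where "\<Delta> = covid_Delta \<delta> N_old \<kappa> \<kappa>_old"
  define bb where "bb = \<beta> * (1 - \<sigma>)"
  define f where "f = seir_field \<Lambda> \<mu> \<beta> \<alpha> \<gamma> \<sigma> \<xi> \<Delta>"
  define xs where "xs = (Ss, Es, Is, Rs)"
  have pos: "\<mu> > 0" "\<alpha> > 0" "\<gamma> > 0" "\<xi> \<ge> 0" "Es > 0" "Is > 0" "Rs > 0" using assms by auto
  have \<Delta>nn: "\<Delta> \<ge> 0" unfolding \<Delta>_def covid_Delta_def using assms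
    by (intro mult_nonneg_nonneg add_nonneg_nonneg) auto
  have bbpos: "bb > 0" using assms by (simp add: bb_def)
  have feq: "f xs = 0" using assms(17) unfolding f_def xs_def \<Delta>_def equilibrium_def by simp
  have eqs: "\<Lambda> - \<mu> * Ss - \<beta> * (1 - \<sigma>) * Ss * Is + \<xi> * Rs = 0"
     "\<beta> * (1 - \<sigma>) * Ss * Is - (\<mu> + \<alpha>) * Es = 0"
     "\<alpha> * Es - (\<mu> + \<gamma>) * Is - \<Delta> * Is = 0"
     "\<gamma> * Is - \<mu> * Rs - \<xi> * Rs = 0"
    using feq unfolding f_def xs_def seir_field_def by (simp_all add: zero_prod_def)
  have "bb * Ss * Is > 0" using eqs(2) pos unfolding bb_def by simp
  then have "Ss * (bb * Is) > 0" by (simp add: algebra_simps)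
  moreover have "bb * Is > 0" using bbpos pos by simp
  ultimately have Sspos: "Ss > 0" by (simp add: zero_less_mult_iff)
  define h a b k1 k2 k3 where "h = \<mu> + bb * Is" and "a = bb * Is" and "b = \<xi> * Rs / Ss"
    and "k1 = \<mu> + \<alpha>" and "k2 = \<mu> + \<gamma> + \<Delta>" and "k3 = \<mu> + \<xi>"
  have b0: "0 \<le> b" using pos Sspos unfolding b_def by simp
  have blt: "b < a"
  proof -
    have m1: "\<mu> * Rs > 0" "\<mu> * Is > 0" "\<mu> * Es > 0" "\<Delta> * Is \<ge> 0" using pos \<Delta>nn by auto
    have "\<xi> * Rs < bb * Ss * Is" using eqs m1 unfolding bb_def by (simp add: algebra_simps; linarith)
    then have "\<xi> * Rs < (bb * Is) * Ss" by (simp add: algebra_simps)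
    then show ?thesis unfolding a_def b_def using Sspos by (simp add: pos_divide_less_eq)
  qed
  have ah: "a < h" unfolding a_def h_def using pos by simp
  have kp: "k1 > 0" "k2 > 0" "k3 > 0" unfolding k1_def k2_def k3_def using pos \<Delta>nn by auto
  obtain e m M c r where lyn: "e > 0" "m > 0" "c > 0" "r > 0"
    "\<And>u. m * (norm u)\<^sup>2 \<le> Qn h a b k1 k2 k3 e u"
    "\<And>u. Qn h a b k1 k2 k3 e u \<le> M * (norm u)\<^sup>2"
    "\<And>u. norm u < r \<Longrightarrow> DQn h a b k1 k2 k3 e u (Fn h a b k1 k2 k3 u) \<le> - c * Qn h a b k1 k2 k3 e u"
    using norm_lyap[OF b0 blt ah kp] by blast
  define Tl where "Tl y = (cX y / Ss, cW y / Es - cZ y / Is, cZ y / Is, cD y / Rs - cZ y / Is)"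
    for y :: "real \<times> real \<times> real \<times> real"
  define T where "T x = Tl (x - xs)" for x
  have Tl_add: "Tl (x + y) = Tl x + Tl y" for x y
    unfolding Tl_def by (simp add: prod_eq_iff add_divide_distrib)
  have Tl_scale: "Tl (t *\<^sub>R y) = t *\<^sub>R Tl y" for t y
    unfolding Tl_def by (simp add: prod_eq_iff right_diff_distrib)
  have lin: "linear Tl" by (rule linearI[OF Tl_add Tl_scale])
  have blin: "bounded_linear Tl" using lin by (simp add: linear_conv_bounded_linear)
  have Tder: "(T has_derivative Tl) (at x)" for x
  proof -
    have "((\<lambda>x. Tl (x - xs)) has_derivative (\<lambda>h. Tl (h - 0))) (at x)"
      by (rule bounded_linear.has_derivative[OF blin]) (auto intro!: derivative_eq_intros)
    then show ?thesis unfolding T_def by simp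
  qed
  define V where "V = Qn h a b k1 k2 k3 e \<circ> T"
  define DV where "DV x = DQn h a b k1 k2 k3 e (T x) \<circ> Tl" for x
  have Vder: "(V has_derivative DV x) (at x)" for x
    unfolding V_def DV_def by (rule diff_chain_at[OF Tder Qn_deriv])
  have Tl0: "y = 0" if "Tl y = 0" for y
    using that pos Sspos unfolding Tl_def by (auto simp: prod_eq_iff)
  have Tlc: "continuous_on UNIV Tl"
    using blin linear_continuous_on by blast
  obtain cT where cT: "cT > 0" "\<And>y. cT * (norm y)\<^sup>2 \<le> (norm (Tl y))\<^sup>2"
  proof -
    have "\<exists>m>0. \<forall>y. m * (norm y)\<^sup>2 \<le> (norm (Tl y))\<^sup>2"
    proof (rule hom2_lower)
      show "continuous_on UNIV (\<lambda>y. (norm (Tl y))\<^sup>2)" using Tlc by (intro continuous_intros) auto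
      show "(norm (Tl (t *\<^sub>R u)))\<^sup>2 = t\<^sup>2 * (norm (Tl u))\<^sup>2" for t u
        by (simp add: Tl_scale power_mult_distrib)
      show "(norm (Tl u))\<^sup>2 > 0" if "norm u = 1" for u
        using that Tl0[of u] by auto
    qed
    then show ?thesis using that by blast
  qed
  obtain CT where CT: "CT > 0" "\<And>y. \<bar>norm (Tl y)\<bar> \<le> CT * norm y ^ 1"
  proof -
    have "\<exists>C>0. \<forall>y. \<bar>norm (Tl y)\<bar> \<le> C * norm y ^ 1"
    proof (rule homk_upper)
      show "continuous_on UNIV (\<lambda>y. norm (Tl y))" using Tlc by (intro continuous_intros) auto
      show "norm (Tl (t *\<^sub>R u)) = t ^ 1 * norm (Tl u)" if "t \<ge> 0" for t u
        using that by (simp add: Tl_scale)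
    qed simp
    then show ?thesis using that by blast
  qed
  have Tn: "norm (T x) \<le> CT * norm (x - xs)" for x using CT(2)[of "x - xs"] by (simp add: T_def)
  have Vlow: "(m * cT) * (norm (x - xs))\<^sup>2 \<le> V x" for x
  proof -
    have "(m * cT) * (norm (x - xs))\<^sup>2 = m * (cT * (norm (x - xs))\<^sup>2)" by simp
    also have "\<dots> \<le> m * (norm (T x))\<^sup>2" using cT(2)[of "x - xs"] lyn(2) by (simp add: T_def)
    also have "\<dots> \<le> V x" using lyn(5)[of "T x"] by (simp add: V_def)
    finally show ?thesis .
  qed
  have Vup: "V x \<le> (\<bar>M\<bar> * CT\<^sup>2) * (norm (x - xs))\<^sup>2" for x
  proof -
    have "V x \<le> M * (norm (T x))\<^sup>2" using lyn(6)[of "T x"] by (simp add: V_def)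
    also have "\<dots> \<le> \<bar>M\<bar> * (norm (T x))\<^sup>2" by (intro mult_right_mono) auto
    also have "\<dots> \<le> \<bar>M\<bar> * (CT * norm (x - xs))\<^sup>2"
      using Tn[of x] by (intro mult_left_mono power_mono) auto
    finally show ?thesis by (simp add: power_mult_distrib)
  qed
  have fid: "Tl (f x) = Fn h a b k1 k2 k3 (T x)" for x
  proof -
    obtain S E I R where x: "x = (S, E, I, R)" by (cases x) auto
    have "Tl (f x) = ((\<Lambda> - \<mu> * S - \<beta> * (1 - \<sigma>) * S * I + \<xi> * R) / Ss,
          (\<beta> * (1 - \<sigma>) * S * I - (\<mu> + \<alpha>) * E) / Es - (\<alpha> * E - (\<mu> + \<gamma>) * I - \<Delta> * I) / Is,
          (\<alpha> * E - (\<mu> + \<gamma>) * I - \<Delta> * I) / Is,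
          (\<gamma> * I - \<mu> * R - \<xi> * R) / Rs - (\<alpha> * E - (\<mu> + \<gamma>) * I - \<Delta> * I) / Is)"
      unfolding x f_def Tl_def seir_field_def by simp
    also have "\<dots> = Fn (\<mu> + \<beta> * (1 - \<sigma>) * Is) (\<beta> * (1 - \<sigma>) * Is) (\<xi> * Rs / Ss) (\<mu> + \<alpha>) (\<mu> + \<gamma> + \<Delta>) (\<mu> + \<xi>)
        ((S - Ss) / Ss, (E - Es) / Es - (I - Is) / Is, (I - Is) / Is, (R - Rs) / Rs - (I - Is) / Is)"
      by (rule field_id[OF Sspos pos(5,6,7) eqs])
    also have "\<dots> = Fn h a b k1 k2 k3 (T x)"
      unfolding x T_def Tl_def xs_def h_def a_def b_def k1_def k2_def k3_def bb_def by simp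
    finally show ?thesis .
  qed
  define r' where "r' = r / CT"
  have r': "r' > 0" using lyn(4) CT(1) by (simp add: r'_def)
  have decr: "DV x (f x) \<le> - c * V x" if "norm (x - xs) < r'" for x
  proof -
    have "norm (T x) \<le> CT * norm (x - xs)" by (rule Tn)
    also have "\<dots> < CT * r'" using that CT(1) by simp
    also have "\<dots> = r" using CT(1) by (simp add: r'_def)
    finally have "norm (T x) < r" .
    then have "DQn h a b k1 k2 k3 e (T x) (Fn h a b k1 k2 k3 (T x)) \<le> - c * Qn h a b k1 k2 k3 e (T x)"
      by (rule lyn(7))
    then show ?thesis unfolding DV_def V_def by (simp add: fid)
  qed
  have "locally_asymptotically_stable f xs"
    by (rule lyap_LAS[OF feq Vder Vlow _ Vup decr lyn(3) r']) (use lyn(2) cT(1) in simp)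
  then show ?thesis unfolding f_def xs_def \<Delta>_def .
qed

end
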